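(* A finite order $P$ has property (itov) if and only if all of the following hold: (1) $P$ has a relatively maximum full trunk $R$; (2) the induced suborder on $\mathrm{Dom}(P)\setminus R$ has property (itov); (3) every element of $\mathrm{Dom}(P)\setminus R$ is regular to $R$; (4) there is no induced suborder of $P$ isomorphic to $O_{obs1}$ or $O_{obs2}$ whose domain meets both $R$ and $\mathrm{Dom}(P)\setminus R$ and has at least two elements in $\mathrm{Dom}(P)\setminus R$.
   Context: Orders are partial orders; $x\sim y$ means $x\ne y$ and $x,y$ incomparable. $O_{obs1}$ is the order on $\{a,b,c,d\}$ whose only comparabilities are $a<b$, $c<d$; $O_{obs2}$ is the order on $\{a,b,c,d\}$ whose only comparabilities are $a<b$, $c<d$, $c<b$. Property (itov): no induced suborder isomorphic to $O_{obs1}$ or $O_{obs2}$. A trunk of $P$ is a subset $T$ such that for pairwise distinct $x,y,z\in T$, $x\sim y$ and $y\sim z$ imply $x\sim z$; $y,z\in T$ lie in the same $T$-level iff $y=z$ or $y\sim z$. A chain is maximum if it has maximum cardinality among chains of $P$; a full trunk is a trunk containing a maximum chain; a relatively maximum full trunk is a full trunk that is the unique inclusion-maximal full trunk. An element $x$ is regular to a trunk $T$ if for all $y,z\in T$ in the same $T$-level: $x<y\iff x<z$, $x>y\iff x>z$, and ($x\sim y$ or $x=y$) $\iff$ ($x\sim z$ or $x=z$). *)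

theory Defs
  imports Main
begin

text \<open>A finite order P is represented by a carrier set D (its domain) and a
  relation le (the non-strict order), which is a partial order on D.
  Induced suborders are obtained by restricting the carrier.\<close>

definition po_on :: "'a set \<Rightarrow> ('a \<Rightarrow> 'a \<Rightarrow> bool) \<Rightarrow> bool" where
  "po_on D le \<longleftrightarrow>
     (\<forall>x\<in>D. le x x) \<and>
     (\<forall>x\<in>D. \<forall>y\<in>D. le x y \<and> le y x \<longrightarrow> x = y) \<and>
     (\<forall>x\<in>D. \<forall>y\<in>D. \<forall>z\<in>D. le x y \<and> le y z \<longrightarrow> le x z)"

definition lt :: "('a \<Rightarrow> 'a \<Rightarrow> bool) \<Rightarrow> 'a \<Rightarrow> 'a \<Rightarrow> bool" where
  "lt le x y \<longleftrightarrow> le x y \<and> x \<noteq> y"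

definition inc :: "('a \<Rightarrow> 'a \<Rightarrow> bool) \<Rightarrow> 'a \<Rightarrow> 'a \<Rightarrow> bool" where
  "inc le x y \<longleftrightarrow> x \<noteq> y \<and> \<not> le x y \<and> \<not> le y x"

text \<open>X is the domain of an induced suborder isomorphic to O_obs1
  (only comparabilities a<b, c<d).\<close>
definition is_obs1 :: "('a \<Rightarrow> 'a \<Rightarrow> bool) \<Rightarrow> 'a set \<Rightarrow> bool" where
  "is_obs1 le X \<longleftrightarrow> (\<exists>a b c d. X = {a, b, c, d} \<and> distinct [a, b, c, d] \<and>
      lt le a b \<and> lt le c d \<and>
      inc le a c \<and> inc le a d \<and> inc le b c \<and> inc le b d)"

text \<open>X is the domain of an induced suborder isomorphic to O_obs2
  (only comparabilities a<b, c<d, c<b).\<close>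
definition is_obs2 :: "('a \<Rightarrow> 'a \<Rightarrow> bool) \<Rightarrow> 'a set \<Rightarrow> bool" where
  "is_obs2 le X \<longleftrightarrow> (\<exists>a b c d. X = {a, b, c, d} \<and> distinct [a, b, c, d] \<and>
      lt le a b \<and> lt le c d \<and> lt le c b \<and>
      inc le a c \<and> inc le a d \<and> inc le d b)"

definition itov :: "'a set \<Rightarrow> ('a \<Rightarrow> 'a \<Rightarrow> bool) \<Rightarrow> bool" where
  "itov D le \<longleftrightarrow> \<not> (\<exists>X\<subseteq>D. is_obs1 le X \<or> is_obs2 le X)"

definition trunk :: "'a set \<Rightarrow> ('a \<Rightarrow> 'a \<Rightarrow> bool) \<Rightarrow> 'a set \<Rightarrow> bool" where
  "trunk D le T \<longleftrightarrow> T \<subseteq> D \<and>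
     (\<forall>x\<in>T. \<forall>y\<in>T. \<forall>z\<in>T. distinct [x, y, z] \<and> inc le x y \<and> inc le y z \<longrightarrow> inc le x z)"

definition same_level :: "('a \<Rightarrow> 'a \<Rightarrow> bool) \<Rightarrow> 'a \<Rightarrow> 'a \<Rightarrow> bool" where
  "same_level le y z \<longleftrightarrow> y = z \<or> inc le y z"

definition chain_in :: "'a set \<Rightarrow> ('a \<Rightarrow> 'a \<Rightarrow> bool) \<Rightarrow> 'a set \<Rightarrow> bool" where
  "chain_in D le C \<longleftrightarrow> C \<subseteq> D \<and> (\<forall>x\<in>C. \<forall>y\<in>C. le x y \<or> le y x)"

definition max_chain :: "'a set \<Rightarrow> ('a \<Rightarrow> 'a \<Rightarrow> bool) \<Rightarrow> 'a set \<Rightarrow> bool" where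
  "max_chain D le C \<longleftrightarrow> chain_in D le C \<and>
     (\<forall>C'. chain_in D le C' \<longrightarrow> card C' \<le> card C)"

definition full_trunk :: "'a set \<Rightarrow> ('a \<Rightarrow> 'a \<Rightarrow> bool) \<Rightarrow> 'a set \<Rightarrow> bool" where
  "full_trunk D le T \<longleftrightarrow> trunk D le T \<and> (\<exists>C. max_chain D le C \<and> C \<subseteq> T)"

definition maximal_full_trunk :: "'a set \<Rightarrow> ('a \<Rightarrow> 'a \<Rightarrow> bool) \<Rightarrow> 'a set \<Rightarrow> bool" where
  "maximal_full_trunk D le T \<longleftrightarrow> full_trunk D le T \<and>
     (\<forall>T'. full_trunk D le T' \<and> T \<subseteq> T' \<longrightarrow> T' = T)"

definition rel_max_full_trunk :: "'a set \<Rightarrow> ('a \<Rightarrow> 'a \<Rightarrow> bool) \<Rightarrow> 'a set \<Rightarrow> bool" where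
  "rel_max_full_trunk D le R \<longleftrightarrow> maximal_full_trunk D le R \<and>
     (\<forall>T. maximal_full_trunk D le T \<longrightarrow> T = R)"

definition regular_to :: "('a \<Rightarrow> 'a \<Rightarrow> bool) \<Rightarrow> 'a set \<Rightarrow> 'a \<Rightarrow> bool" where
  "regular_to le T x \<longleftrightarrow> (\<forall>y\<in>T. \<forall>z\<in>T. same_level le y z \<longrightarrow>
      (lt le x y \<longleftrightarrow> lt le x z) \<and>
      (lt le y x \<longleftrightarrow> lt le z x) \<and>
      ((inc le x y \<or> x = y) \<longleftrightarrow> (inc le x z \<or> x = z)))"

end

theory Submission
  imports Defs
begin


lemma poD:
  assumes "po_on D le"
  shows "\<And>x. x\<in>D \<Longrightarrow> le x x"
    and "\<And>x y. x\<in>D \<Longrightarrow> y\<in>D \<Longrightarrow> le x y \<Longrightarrow> le y x \<Longrightarrow> x = y"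
    and "\<And>x y z. x\<in>D \<Longrightarrow> y\<in>D \<Longrightarrow> z\<in>D \<Longrightarrow> le x y \<Longrightarrow> le y z \<Longrightarrow> le x z"
  using assms unfolding po_on_def by blast+

lemma po_flip: assumes "po_on D le" shows "po_on D (\<lambda>x y. le y x)"
  unfolding po_on_def
proof (intro conjI ballI impI)
  fix x y z assume "x\<in>D" "y\<in>D" "z\<in>D" "le y x \<and> le z y"
  then show "le z x" using poD(3)[OF assms, of z y x] by blast
next
  fix x y assume "x\<in>D" "y\<in>D" "le y x \<and> le x y"
  then show "x = y" using poD(2)[OF assms, of x y] by blast
next
  fix x assume "x\<in>D" then show "le x x" using poD(1)[OF assms] by blast
qed

lemma chain_flip: "chain_in D (\<lambda>x y. le y x) = chain_in D le"
  unfolding chain_in_def by (rule ext) (simp add: disj_commute)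

lemma max_chain_flip: "max_chain D (\<lambda>x y. le y x) = max_chain D le"
proof (rule ext)
  fix C
  have e: "\<And>C. chain_in D (\<lambda>x y. le y x) C = chain_in D le C" by (rule fun_cong[OF chain_flip])
  show "max_chain D (\<lambda>x y. le y x) C = max_chain D le C"
    unfolding max_chain_def by (simp only: e)
qed

lemma lt_flip: "lt (\<lambda>x y. le y x) x y = lt le y x"
  unfolding lt_def by auto

lemma inc_flip: "inc (\<lambda>x y. le y x) x y = inc le x y"
  unfolding inc_def by auto

lemma inc_sym: "inc le x y = inc le y x"
  unfolding inc_def by auto

lemma itov_flip: "itov D le \<Longrightarrow> itov D (\<lambda>x y. le y x)"
proof -
  assume h: "itov D le"
  show ?thesis unfolding itov_def
  proof
    assume "\<exists>X\<subseteq>D. is_obs1 (\<lambda>x y. le y x) X \<or> is_obs2 (\<lambda>x y. le y x) X"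
    then obtain X where X: "X \<subseteq> D" "is_obs1 (\<lambda>x y. le y x) X \<or> is_obs2 (\<lambda>x y. le y x) X" by blast
    have "is_obs1 le X \<or> is_obs2 le X"
    proof (cases "is_obs1 (\<lambda>x y. le y x) X")
      case True
      then obtain a b c d where "X = {a, b, c, d}" "distinct [a, b, c, d]"
        "lt le b a" "lt le d c" "inc le a c" "inc le a d" "inc le b c" "inc le b d"
        unfolding is_obs1_def lt_def inc_def by auto
      then have "is_obs1 le X" unfolding is_obs1_def
        apply (rule_tac x=b in exI, rule_tac x=a in exI, rule_tac x=d in exI, rule_tac x=c in exI)
        by (auto simp: inc_def)
      then show ?thesis by simp
    next
      case False
      then have "is_obs2 (\<lambda>x y. le y x) X" using X by simp
      then obtain a b c d where "X = {a, b, c, d}" "distinct [a, b, c, d]"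
        "lt le b a" "lt le d c" "lt le b c" "inc le a c" "inc le a d" "inc le d b"
        unfolding is_obs2_def lt_def inc_def by auto
      then have "is_obs2 le X" unfolding is_obs2_def
        apply (rule_tac x=d in exI, rule_tac x=c in exI, rule_tac x=b in exI, rule_tac x=a in exI)
        by (auto simp: inc_def)
      then show ?thesis by simp
    qed
    then show False using h X unfolding itov_def by blast
  qed
qed

lemma chain_sub: "chain_in D le C \<Longrightarrow> C \<subseteq> D"
  unfolding chain_in_def by blast

lemma exists_max_chain:
  assumes "finite D"
  shows "\<exists>C. max_chain D le C"
proof -
  have "\<exists>C. chain_in D le C \<and> (\<forall>C'. chain_in D le C' \<longrightarrow> card C' \<le> card C)"
  proof (rule ex_has_greatest_nat[where k="{}" and b="card D + 1"])
    show "chain_in D le {}" unfolding chain_in_def by simp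
    show "\<forall>y. chain_in D le y \<longrightarrow> card y < card D + 1"
      using assms by (auto dest!: chain_sub intro: card_mono le_imp_less_Suc)
  qed
  then show ?thesis unfolding max_chain_def by blast
qed

definition mcu :: "'a set \<Rightarrow> ('a \<Rightarrow> 'a \<Rightarrow> bool) \<Rightarrow> 'a set" where
  "mcu D le = {x. \<exists>C. max_chain D le C \<and> x \<in> C}"

lemma mcu_flip: "mcu D (\<lambda>x y. le y x) = mcu D le"
  unfolding mcu_def max_chain_flip[of D le] by (rule refl)

lemma mcu_sub: "mcu D le \<subseteq> D"
  unfolding mcu_def max_chain_def chain_in_def by blast

definition dc :: "'a set \<Rightarrow> ('a \<Rightarrow> 'a \<Rightarrow> bool) \<Rightarrow> 'a \<Rightarrow> nat" where
  "dc D le u = Max (card ` {A. chain_in D le A \<and> (\<forall>a\<in>A. le a u)})"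

lemma dc_fin: "finite D \<Longrightarrow> finite {A. chain_in D le A \<and> (\<forall>a\<in>A. le a u)}"
  by (rule finite_subset[of _ "Pow D"]) (auto dest: chain_sub)

lemma dc_ge:
  assumes "finite D" "chain_in D le A" "\<forall>a\<in>A. le a u"
  shows "card A \<le> dc D le u"
  unfolding dc_def using assms dc_fin[OF assms(1)] by (intro Max_ge) auto

lemma dc_ex:
  assumes "finite D"
  shows "\<exists>A. chain_in D le A \<and> (\<forall>a\<in>A. le a u) \<and> card A = dc D le u"
proof -
  have ne: "{A. chain_in D le A \<and> (\<forall>a\<in>A. le a u)} \<noteq> {}"
    unfolding chain_in_def by auto
  have "dc D le u \<in> card ` {A. chain_in D le A \<and> (\<forall>a\<in>A. le a u)}"
    unfolding dc_def using dc_fin[OF assms] ne by (intro Max_in) auto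
  then show ?thesis by auto
qed



lemma chain_flipD: "chain_in D (\<lambda>x y. le y x) C \<Longrightarrow> chain_in D le C"
  using fun_cong[OF chain_flip, of D le C] by simp

lemma chain_insert:
  assumes "chain_in D le A" "v \<in> D" "\<forall>a\<in>A. le a v" "le v v"
  shows "chain_in D le (insert v A)"
  unfolding chain_in_def
proof (intro conjI ballI)
  show "insert v A \<subseteq> D" using assms unfolding chain_in_def by blast
next
  fix x y assume "x \<in> insert v A" "y \<in> insert v A"
  then show "le x y \<or> le y x"
  proof (cases "x = v")
    case True
    then show ?thesis using assms(3,4) \<open>y \<in> insert v A\<close> by auto
  next
    case False
    then have "x \<in> A" using \<open>x \<in> insert v A\<close> by blast
    then show ?thesis using assms(1,3) \<open>y \<in> insert v A\<close> unfolding chain_in_def by blast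
  qed
qed

lemma chain_subset: "chain_in D le A \<Longrightarrow> B \<subseteq> A \<Longrightarrow> chain_in D le B"
  unfolding chain_in_def by blast

lemma maxc_card: "max_chain D le C \<Longrightarrow> chain_in D le C' \<Longrightarrow> card C' \<le> card C"
  unfolding max_chain_def by blast

lemma F1:
  assumes fin: "finite D" and po: "po_on D le" and mc: "max_chain D le C0" and u: "u \<in> D"
  shows "dc D le u + dc D (\<lambda>x y. le y x) u \<le> card C0 + 1"
proof -
  obtain A where A: "chain_in D le A" "\<forall>a\<in>A. le a u" "card A = dc D le u"
    using dc_ex[OF fin] by blast
  obtain B where B0: "chain_in D (\<lambda>x y. le y x) B" "\<forall>a\<in>B. le u a" "card B = dc D (\<lambda>x y. le y x) u"
    using dc_ex[OF fin, of "\<lambda>x y. le y x" u] by blast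
  have B: "chain_in D le B" using chain_flipD[OF B0(1)] .
  have AD: "A \<subseteq> D" and BD: "B \<subseteq> D" using A(1) B chain_sub by blast+
  have finA: "finite A" and finB: "finite B" using AD BD fin finite_subset by blast+
  have "chain_in D le (A \<union> B)"
    unfolding chain_in_def
  proof (intro conjI ballI)
    show "A \<union> B \<subseteq> D" using AD BD by blast
  next
    fix x y assume x: "x \<in> A \<union> B" and y: "y \<in> A \<union> B"
    show "le x y \<or> le y x"
    proof -
      { assume "x \<in> A" "y \<in> B"
        then have "le x y" using poD(3)[OF po, of x u y] A(2) B0(2) AD BD u by blast }
      moreover
      { assume "y \<in> A" "x \<in> B"
        then have "le y x" using poD(3)[OF po, of y u x] A(2) B0(2) AD BD u by blast }
      moreover
      { assume "x \<in> A" "y \<in> A" then have ?thesis using A(1) unfolding chain_in_def by blast }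
      moreover
      { assume "x \<in> B" "y \<in> B" then have ?thesis using B unfolding chain_in_def by blast }
      ultimately show ?thesis using x y by blast
    qed
  qed
  then have c1: "card (A \<union> B) \<le> card C0" using maxc_card[OF mc] by blast
  have "A \<inter> B \<subseteq> {u}"
  proof
    fix x assume "x \<in> A \<inter> B"
    then have "le x u" "le u x" "x \<in> D" using A(2) B0(2) AD by auto
    then show "x \<in> {u}" using poD(2)[OF po] u by blast
  qed
  then have "card (A \<inter> B) \<le> card {u}" by (rule card_mono[rotated]) simp
  then have "card (A \<inter> B) \<le> 1" by simp
  moreover have "card A + card B = card (A \<union> B) + card (A \<inter> B)"
    using card_Un_Int[OF finA finB] .
  ultimately show ?thesis using c1 A(3) B0(3) by linarith
qed

lemma F2:
  assumes fin: "finite D" and po: "po_on D le" and mc: "max_chain D le C" and u: "u \<in> C"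
  shows "card C + 1 \<le> dc D le u + dc D (\<lambda>x y. le y x) u"
proof -
  have ch: "chain_in D le C" using mc unfolding max_chain_def by blast
  have CD: "C \<subseteq> D" using ch chain_sub by blast
  have finC: "finite C" using CD fin finite_subset by blast
  define A where "A = {c\<in>C. le c u}"
  define B where "B = {c\<in>C. le u c}"
  have Ach: "chain_in D le A" using ch unfolding A_def chain_in_def by blast
  have Bch: "chain_in D (\<lambda>x y. le y x) B" using ch unfolding B_def chain_in_def by blast
  have "card A \<le> dc D le u" using dc_ge[OF fin Ach] unfolding A_def by blast
  moreover have "card B \<le> dc D (\<lambda>x y. le y x) u" using dc_ge[OF fin Bch] unfolding B_def by blast
  moreover have "A \<union> B = C" using ch u unfolding A_def B_def chain_in_def by blast
  moreover have "A \<inter> B = {u}"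
  proof
    show "A \<inter> B \<subseteq> {u}" using poD(2)[OF po] CD u unfolding A_def B_def by blast
    show "{u} \<subseteq> A \<inter> B" using poD(1)[OF po] CD u unfolding A_def B_def by blast
  qed
  moreover have "card A + card B = card (A \<union> B) + card (A \<inter> B)"
    using card_Un_Int[of A B] finC unfolding A_def B_def by auto
  ultimately show ?thesis by simp
qed

lemma F3:
  assumes fin: "finite D" and po: "po_on D le" and u: "u \<in> D" and v: "v \<in> D"
    and h: "\<forall>w\<in>D. lt le w u \<longrightarrow> lt le w v"
  shows "dc D le u \<le> dc D le v"
proof -
  obtain A where A: "chain_in D le A" "\<forall>a\<in>A. le a u" "card A = dc D le u"
    using dc_ex[OF fin] by blast
  have AD: "A \<subseteq> D" using A(1) chain_sub by blast
  have finA: "finite A" using AD fin finite_subset by blast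
  have lt: "\<And>a. a \<in> A - {u} \<Longrightarrow> lt le a v"
    using h A(2) AD unfolding lt_def by blast
  have "chain_in D le (insert v (A - {u}))"
    using chain_insert[OF chain_subset[OF A(1), of "A - {u}"] v _ poD(1)[OF po v]] lt unfolding lt_def by blast
  moreover have "\<forall>a\<in>insert v (A - {u}). le a v" using lt poD(1)[OF po] v unfolding lt_def by blast
  ultimately have "card (insert v (A - {u})) \<le> dc D le v" using dc_ge[OF fin] by blast
  moreover have "v \<notin> A - {u}" using lt unfolding lt_def by blast
  then have "card (insert v (A - {u})) = card (A - {u}) + 1" using finA by simp
  moreover have "card A \<le> card (A - {u}) + 1"
    using finA by (cases "u \<in> A") (auto simp: card_Diff_singleton)
  ultimately show ?thesis using A(3) by linarith
qed

lemma F4: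
  assumes fin: "finite D" and po: "po_on D le" and u: "u \<in> D" and w: "w \<in> D"
    and h: "lt le w u"
  shows "dc D le w < dc D le u"
proof -
  obtain A where A: "chain_in D le A" "\<forall>a\<in>A. le a w" "card A = dc D le w"
    using dc_ex[OF fin] by blast
  have AD: "A \<subseteq> D" using A(1) chain_sub by blast
  have finA: "finite A" using AD fin finite_subset by blast
  have below: "\<forall>a\<in>A. le a u" using A(2) AD poD(3)[OF po] u w h unfolding lt_def by blast
  have uA: "u \<notin> A" using A(2) h poD(2)[OF po] u w unfolding lt_def by blast
  have "chain_in D le (insert u A)" using chain_insert[OF A(1) u below poD(1)[OF po u]] .
  moreover have "\<forall>a\<in>insert u A. le a u" using below poD(1)[OF po] u by blast
  ultimately have "card (insert u A) \<le> dc D le u" using dc_ge[OF fin] by blast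
  then show ?thesis using uA finA A(3) by simp
qed



lemma mc_same_card: "max_chain D le C \<Longrightarrow> max_chain D le C' \<Longrightarrow> card C = card C'"
  unfolding max_chain_def by (meson le_antisym)

lemma sum_eq:
  assumes fin: "finite D" and po: "po_on D le" and mc: "max_chain D le C0" and u: "u \<in> mcu D le"
  shows "dc D le u + dc D (\<lambda>x y. le y x) u = card C0 + 1"
proof -
  obtain C where C: "max_chain D le C" "u \<in> C" using u unfolding mcu_def by blast
  have uD: "u \<in> D" by (rule subsetD[OF mcu_sub u])
  have a1: "dc D le u + dc D (\<lambda>x y. le y x) u \<le> card C0 + 1" by (rule F1[OF fin po mc uD])
  have a2: "card C + 1 \<le> dc D le u + dc D (\<lambda>x y. le y x) u" by (rule F2[OF fin po C])
  have a3: "card C = card C0" by (rule mc_same_card[OF C(1) mc])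
  show ?thesis using a1 a2 a3 by linarith
qed

lemma mk_obs1:
  assumes "lt le a b" "lt le c d" "inc le a c" "inc le a d" "inc le b c" "inc le b d"
  shows "is_obs1 le {a, b, c, d}"
proof -
  have "distinct [a, b, c, d]" using assms unfolding lt_def inc_def by auto
  then show ?thesis unfolding is_obs1_def using assms by (intro exI[of _ a] exI[of _ b] exI[of _ c] exI[of _ d]) simp
qed

lemma mk_obs2:
  assumes "lt le a b" "lt le c d" "lt le c b" "inc le a c" "inc le a d" "inc le d b"
  shows "is_obs2 le {a, b, c, d}"
proof -
  have "distinct [a, b, c, d]" using assms unfolding lt_def inc_def by auto
  then show ?thesis unfolding is_obs2_def using assms by (intro exI[of _ a] exI[of _ b] exI[of _ c] exI[of _ d]) simp
qed

lemma itovD: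
  assumes "itov D le" "a \<in> D" "b \<in> D" "c \<in> D" "d \<in> D"
  shows "\<not> is_obs1 le {a, b, c, d}" "\<not> is_obs2 le {a, b, c, d}"
proof -
  have "{a, b, c, d} \<subseteq> D" using assms(2-5) by simp
  then show "\<not> is_obs1 le {a, b, c, d}" "\<not> is_obs2 le {a, b, c, d}"
    using assms(1) unfolding itov_def by auto
qed

lemma OBS:
  assumes po: "po_on D le" and it: "itov D le"
    and D: "a \<in> D" "b \<in> D" "u \<in> D" "v \<in> D"
    and uv: "inc le u v" and bv: "lt le b v" and bu: "\<not> lt le b u"
    and ua: "lt le u a" and va: "\<not> lt le v a"
  shows False
proof -
  note tr = poD(3)[OF po]
  have uv': "u \<noteq> v" "\<not> le u v" "\<not> le v u" using uv unfolding inc_def by auto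
  have bv': "le b v" "b \<noteq> v" using bv unfolding lt_def by auto
  have ua': "le u a" "u \<noteq> a" using ua unfolding lt_def by auto
  have "b \<noteq> u" using bv' uv' by metis
  moreover have "\<not> le u b" using tr[of u b v] D bv' uv' by metis
  moreover have "\<not> le b u" using bu \<open>b \<noteq> u\<close> unfolding lt_def by blast
  ultimately have iub: "inc le u b" unfolding inc_def by blast
  have "a \<noteq> v" using ua' uv' by metis
  moreover have "\<not> le a v" using tr[of u a v] D ua' uv' by metis
  moreover have "\<not> le v a" using va \<open>a \<noteq> v\<close> unfolding lt_def by blast
  ultimately have iav: "inc le a v" unfolding inc_def by blast
  have nab: "\<not> le a b" using tr[of u a b] tr[of u b v] D ua' bv' uv' by metis
  have ab: "a \<noteq> b" using ua' iub unfolding inc_def by metis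
  show False
  proof (cases "le b a")
    case True
    then have "lt le b a" using ab unfolding lt_def by blast
    then have "is_obs2 le {u, a, b, v}"
      using mk_obs2[OF ua bv _ iub uv] iav inc_sym by metis
    then show False using itovD[OF it D(3,1,2,4)] by blast
  next
    case False
    then have "inc le a b" using nab ab unfolding inc_def by blast
    then have "is_obs1 le {u, a, b, v}"
      using mk_obs1[OF ua bv iub uv] iav by metis
    then show False using itovD[OF it D(3,1,2,4)] by blast
  qed
qed

lemma Kpre:
  assumes fin: "finite D" and po: "po_on D le" and it: "itov D le"
    and u: "u \<in> mcu D le" and v: "v \<in> mcu D le" and uv: "inc le u v"
    and lt: "dc D le u < dc D le v"
  shows False
proof -
  obtain C0 where mc: "max_chain D le C0" using exists_max_chain[OF fin] by blast
  have uD: "u \<in> D" by (rule subsetD[OF mcu_sub u])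
  have vD: "v \<in> D" by (rule subsetD[OF mcu_sub v])
  have s1: "dc D (\<lambda>x y. le y x) v < dc D (\<lambda>x y. le y x) u"
    using sum_eq[OF fin po mc u] sum_eq[OF fin po mc v] lt by linarith
  have "\<not> (\<forall>w\<in>D. lt le w v \<longrightarrow> lt le w u)"
    using F3[OF fin po vD uD] lt by linarith
  then obtain b where b: "b \<in> D" "lt le b v" "\<not> lt le b u" by blast
  have "\<not> (\<forall>w\<in>D. lt (\<lambda>x y. le y x) w u \<longrightarrow> lt (\<lambda>x y. le y x) w v)"
    using F3[OF fin po_flip[OF po] uD vD] s1 by linarith
  then obtain a where a: "a \<in> D" "lt le u a" "\<not> lt le v a"
    unfolding lt_def by blast
  show False using OBS[OF po it a(1) b(1) uD vD uv b(2,3) a(2,3)] .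
qed

lemma Klem:
  assumes fin: "finite D" and po: "po_on D le" and it: "itov D le"
    and u: "u \<in> mcu D le" and v: "v \<in> mcu D le" and uv: "inc le u v"
  shows "dc D le u = dc D le v"
proof -
  have "\<not> dc D le u < dc D le v" using Kpre[OF fin po it u v uv] by blast
  moreover have "\<not> dc D le v < dc D le u" using Kpre[OF fin po it v u] uv inc_sym by metis
  ultimately show ?thesis by linarith
qed

lemma mcu_trunk:
  assumes fin: "finite D" and po: "po_on D le" and it: "itov D le"
  shows "trunk D le (mcu D le)"
  unfolding trunk_def
proof (intro conjI ballI impI)
  show "mcu D le \<subseteq> D" by (rule mcu_sub)
next
  fix x y z assume x: "x \<in> mcu D le" and y: "y \<in> mcu D le" and z: "z \<in> mcu D le"
    and h: "distinct [x, y, z] \<and> inc le x y \<and> inc le y z"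
  have e: "dc D le x = dc D le z" using Klem[OF fin po it x y] Klem[OF fin po it y z] h by simp
  have xD: "x \<in> D" by (rule subsetD[OF mcu_sub x])
  have zD: "z \<in> D" by (rule subsetD[OF mcu_sub z])
  have xz: "x \<noteq> z" using h by simp
  have "\<not> le x z" using F4[OF fin po zD xD] e xz unfolding lt_def by auto
  moreover have "\<not> le z x" using F4[OF fin po xD zD] e xz unfolding lt_def by auto
  ultimately show "inc le x z" using xz unfolding inc_def by blast
qed

lemma chain_insert2:
  assumes "chain_in D le A" "v \<in> D" "\<forall>a\<in>A. le a v \<or> le v a" "le v v"
  shows "chain_in D le (insert v A)"
  unfolding chain_in_def
proof (intro conjI ballI)
  show "insert v A \<subseteq> D" using assms unfolding chain_in_def by blast
next
  fix x y assume x: "x \<in> insert v A" and y: "y \<in> insert v A"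
  show "le x y \<or> le y x"
  proof (cases "x = v")
    case True
    then show ?thesis using assms(3,4) y by auto
  next
    case False
    then have "x \<in> A" using x by blast
    then show ?thesis using assms(1,3) y unfolding chain_in_def by auto
  qed
qed

lemma trunkD:
  assumes "trunk D le T" "x \<in> T" "y \<in> T" "z \<in> T" "distinct [x, y, z]" "inc le x y" "inc le y z"
  shows "inc le x z"
proof -
  have h: "\<forall>x\<in>T. \<forall>y\<in>T. \<forall>z\<in>T. distinct [x, y, z] \<and> inc le x y \<and> inc le y z \<longrightarrow> inc le x z"
    using assms(1) unfolding trunk_def by (rule conjunct2)
  show ?thesis using h[rule_format, OF assms(2,3,4)] assms(5,6,7) by simp
qed

lemma FT:
  assumes fin: "finite D" and po: "po_on D le" and tr: "trunk D le T" and mc: "max_chain D le C"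
    and CT: "C \<subseteq> T" and x: "x \<in> T"
  shows "x \<in> mcu D le"
proof (cases "x \<in> C")
  case True
  then show ?thesis using mc unfolding mcu_def by blast
next
  case False
  have ch: "chain_in D le C" using mc unfolding max_chain_def by blast
  have CD: "C \<subseteq> D" using ch chain_sub by blast
  have finC: "finite C" using CD fin finite_subset by blast
  have TD: "T \<subseteq> D" using tr unfolding trunk_def by blast
  have xD: "x \<in> D" using x TD by blast
  have xx: "le x x" using poD(1)[OF po xD] .
  have "\<exists>c\<in>C. inc le c x"
  proof (rule ccontr)
    assume "\<not> (\<exists>c\<in>C. inc le c x)"
    then have comp: "\<forall>c\<in>C. le c x \<or> le x c" using False unfolding inc_def by auto
    have "chain_in D le (insert x C)" by (rule chain_insert2[OF ch xD comp xx])
    then have "card (insert x C) \<le> card C" using mc unfolding max_chain_def by blast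
    then show False using False finC by simp
  qed
  then obtain c where c: "c \<in> C" "inc le c x" by blast
  have comp: "\<forall>c'\<in>C - {c}. le c' x \<or> le x c'"
  proof
    fix c' assume c': "c' \<in> C - {c}"
    show "le c' x \<or> le x c'"
    proof (rule ccontr)
      assume "\<not> (le c' x \<or> le x c')"
      then have "inc le x c'" using c' False unfolding inc_def by blast
      moreover have "distinct [c, x, c']" using c' False c by auto
      moreover have "c \<in> T" "c' \<in> T" using c c' CT by auto
      ultimately have "inc le c c'" using trunkD[OF tr, of c x c'] c(2) x by simp
      then show False using ch c c' unfolding chain_in_def inc_def by blast
    qed
  qed
  have ch': "chain_in D le (insert x (C - {c}))"
    by (rule chain_insert2[OF chain_subset[OF ch, of "C - {c}"] xD comp xx]) blast
  have "card (insert x (C - {c})) = card C"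
    using False finC c by (cases "card C") (auto simp: card_Diff_singleton)
  then have "max_chain D le (insert x (C - {c}))" using mc ch' unfolding max_chain_def by simp
  then show ?thesis unfolding mcu_def by blast
qed



lemma Reg:
  assumes fin: "finite D" and po: "po_on D le" and it: "itov D le"
    and wD: "w \<in> D" and wM: "w \<notin> mcu D le" and y: "y \<in> mcu D le" and z: "z \<in> mcu D le"
    and yz: "inc le y z" and wy: "lt le w y"
  shows "lt le w z"
proof (rule ccontr)
  assume nwz: "\<not> lt le w z"
  note tr = poD(3)[OF po]
  obtain C where C: "max_chain D le C" "z \<in> C" using z unfolding mcu_def by blast
  have ch: "chain_in D le C" using C(1) unfolding max_chain_def by blast
  have CD: "C \<subseteq> D" using ch chain_sub by blast
  have finC: "finite C" using CD fin finite_subset by blast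
  have CM: "C \<subseteq> mcu D le" using C(1) unfolding mcu_def by blast
  have yD: "y \<in> D" by (rule subsetD[OF mcu_sub y])
  have zD: "z \<in> D" by (rule subsetD[OF mcu_sub z])
  have yz': "y \<noteq> z" "\<not> le y z" "\<not> le z y" using yz unfolding inc_def by auto
  have wy': "le w y" "w \<noteq> y" using wy unfolding lt_def by auto
  have "w \<noteq> z" using wM z by metis
  moreover have "\<not> le z w" using tr[OF zD wD yD] wy' yz' by metis
  moreover have "\<not> le w z" using nwz \<open>w \<noteq> z\<close> unfolding lt_def by metis
  ultimately have iwz: "inc le w z" unfolding inc_def by metis
  have below: "\<forall>p\<in>C. lt le p z \<longrightarrow> lt le p w"
  proof (intro ballI impI)
    fix p assume pC: "p \<in> C" and pz: "lt le p z"
    have pD: "p \<in> D" using pC CD by blast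
    have pw: "p \<noteq> w" using pC CM wM by blast
    have pz': "le p z" "p \<noteq> z" using pz unfolding lt_def by auto
    have nwp: "\<not> le w p" using tr[OF wD pD zD] pz' iwz unfolding inc_def by metis
    show "lt le p w"
    proof (rule ccontr)
      assume "\<not> lt le p w"
      then have "\<not> le p w" using pw unfolding lt_def by metis
      then have iwp: "inc le w p" using nwp pw unfolding inc_def by metis
      have py: "p \<noteq> y" using pz' yz' by metis
      have nyp: "\<not> le y p" using tr[OF yD pD zD] pz' yz' by metis
      show False
      proof (cases "le p y")
        case True
        then have "lt le p y" using py unfolding lt_def by metis
        then have "is_obs2 le {w, y, p, z}"
          using mk_obs2[OF wy pz _ iwp iwz] yz inc_sym by metis
        then show False using itovD[OF it wD yD pD zD] by blast
      next
        case False
        then have "inc le y p" using nyp py unfolding inc_def by metis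
        then have "is_obs1 le {w, y, p, z}"
          using mk_obs1[OF wy pz iwp iwz] yz by metis
        then show False using itovD[OF it wD yD pD zD] by blast
      qed
    qed
  qed
  have above: "\<forall>q\<in>C. lt le z q \<longrightarrow> lt le w q"
  proof (intro ballI impI)
    fix q assume qC: "q \<in> C" and zq: "lt le z q"
    have qD: "q \<in> D" using qC CD by blast
    have qw: "q \<noteq> w" using qC CM wM by blast
    have zq': "le z q" "z \<noteq> q" using zq unfolding lt_def by auto
    have nqw: "\<not> le q w" using tr[OF zD qD wD] zq' iwz unfolding inc_def by metis
    show "lt le w q"
    proof (rule ccontr)
      assume "\<not> lt le w q"
      then have "\<not> le w q" using qw unfolding lt_def by metis
      then have iwq: "inc le w q" using nqw qw unfolding inc_def by metis
      have nyq: "\<not> le y q" using tr[OF wD yD qD] wy' \<open>\<not> le w q\<close> by metis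
      have nqy: "\<not> le q y" using tr[OF zD qD yD] zq' yz' by metis
      have qy: "q \<noteq> y" using zq' yz' by metis
      have "inc le y q" using nyq nqy qy unfolding inc_def by metis
      then have "is_obs1 le {w, y, z, q}"
        using mk_obs1[OF wy zq iwz iwq yz] by metis
      then show False using itovD[OF it wD yD zD qD] by blast
    qed
  qed
  have comp: "\<forall>c\<in>C - {z}. le c w \<or> le w c"
  proof
    fix c assume c: "c \<in> C - {z}"
    then have "le c z \<or> le z c" "c \<noteq> z" using ch C(2) unfolding chain_in_def by auto
    then have "lt le c z \<or> lt le z c" unfolding lt_def by auto
    then have "lt le c w \<or> lt le w c" using below above c by blast
    then show "le c w \<or> le w c" unfolding lt_def by blast
  qed
  have ch': "chain_in D le (insert w (C - {z}))"
    by (rule chain_insert2[OF chain_subset[OF ch, of "C - {z}"] wD comp poD(1)[OF po wD]]) blast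
  have wC: "w \<notin> C" using CM wM by blast
  have "card (insert w (C - {z})) = card C"
    using wC finC C(2) by (cases "card C") (auto simp: card_Diff_singleton)
  then have "max_chain D le (insert w (C - {z}))" using C(1) ch' unfolding max_chain_def by simp
  then have "w \<in> mcu D le" unfolding mcu_def by blast
  then show False using wM by blast
qed

lemma Reg2:
  assumes fin: "finite D" and po: "po_on D le" and it: "itov D le"
    and wD: "w \<in> D" and wM: "w \<notin> mcu D le" and y: "y \<in> mcu D le" and z: "z \<in> mcu D le"
    and yz: "inc le y z" and wy: "lt le y w"
  shows "lt le z w"
proof -
  have e: "mcu D (\<lambda>x y. le y x) = mcu D le" by (rule mcu_flip)
  have "lt (\<lambda>x y. le y x) w z"
  proof (rule Reg[OF fin po_flip[OF po] itov_flip[OF it] wD])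
    show "w \<notin> mcu D (\<lambda>x y. le y x)" using wM e by simp
    show "y \<in> mcu D (\<lambda>x y. le y x)" using y e by simp
    show "z \<in> mcu D (\<lambda>x y. le y x)" using z e by simp
    show "inc (\<lambda>x y. le y x) y z" using yz unfolding inc_def by auto
    show "lt (\<lambda>x y. le y x) w y" using wy unfolding lt_def by auto
  qed
  then show ?thesis unfolding lt_def by auto
qed

lemma regular_mcu:
  assumes fin: "finite D" and po: "po_on D le" and it: "itov D le"
    and wD: "w \<in> D" and wM: "w \<notin> mcu D le"
  shows "regular_to le (mcu D le) w"
  unfolding regular_to_def
proof (intro ballI impI)
  fix y z assume y: "y \<in> mcu D le" and z: "z \<in> mcu D le" and sl: "same_level le y z"
  show "(lt le w y \<longleftrightarrow> lt le w z) \<and> (lt le y w \<longleftrightarrow> lt le z w) \<and>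
        ((inc le w y \<or> w = y) \<longleftrightarrow> (inc le w z \<or> w = z))"
  proof (cases "y = z")
    case True
    then show ?thesis by simp
  next
    case False
    then have yz: "inc le y z" and zy: "inc le z y" using sl unfolding same_level_def inc_def by auto
    have 1: "lt le w y \<longleftrightarrow> lt le w z"
      using Reg[OF fin po it wD wM y z yz] Reg[OF fin po it wD wM z y zy] by blast
    have 2: "lt le y w \<longleftrightarrow> lt le z w"
      using Reg2[OF fin po it wD wM y z yz] Reg2[OF fin po it wD wM z y zy] by blast
    have wy: "w \<noteq> y" using wM y by metis
    have wz: "w \<noteq> z" using wM z by metis
    have "inc le w y \<longleftrightarrow> \<not> lt le w y \<and> \<not> lt le y w" using wy unfolding inc_def lt_def by auto
    moreover have "inc le w z \<longleftrightarrow> \<not> lt le w z \<and> \<not> lt le z w" using wz unfolding inc_def lt_def by auto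
    ultimately show ?thesis using 1 2 wy wz by simp
  qed
qed



lemma itov_mono: "itov D le \<Longrightarrow> D' \<subseteq> D \<Longrightarrow> itov D' le"
  unfolding itov_def by blast

lemma obs_fin: "is_obs1 le X \<or> is_obs2 le X \<Longrightarrow> finite X"
  unfolding is_obs1_def is_obs2_def by auto

lemma obs_in_trunk:
  assumes tr: "trunk D le R" and XR: "X \<subseteq> R" and ob: "is_obs1 le X \<or> is_obs2 le X"
  shows False
  using ob
proof
  assume "is_obs1 le X"
  then obtain a b c d where h: "X = {a, b, c, d}" "distinct [a, b, c, d]"
      "lt le a b" "lt le c d" "inc le a c" "inc le a d" "inc le b c" "inc le b d"
    unfolding is_obs1_def by blast
  have "inc le a b" using trunkD[OF tr, of a c b] h XR inc_sym by (metis distinct_length_2_or_more distinct_singleton insert_subset list.set(1,2) distinct.simps(2))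
  then show False using h(3) unfolding inc_def lt_def by blast
next
  assume "is_obs2 le X"
  then obtain a b c d where h: "X = {a, b, c, d}" "distinct [a, b, c, d]"
      "lt le a b" "lt le c d" "lt le c b" "inc le a c" "inc le a d" "inc le d b"
    unfolding is_obs2_def by blast
  have "inc le a b" using trunkD[OF tr, of a d b] h XR by (metis distinct_length_2_or_more distinct_singleton insert_subset list.set(1,2) distinct.simps(2))
  then show False using h(3) unfolding inc_def lt_def by blast
qed

lemma regD:
  assumes "regular_to le R x" "y \<in> R" "z \<in> R" "inc le y z"
  shows "(lt le x y \<longleftrightarrow> lt le x z) \<and> (lt le y x \<longleftrightarrow> lt le z x)"
  using assms unfolding regular_to_def same_level_def by blast

lemma one_out:
  assumes ob: "is_obs1 le X \<or> is_obs2 le X" and XR: "X - R = {x}"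
    and reg: "regular_to le R x"
  shows False
  using ob
proof
  assume "is_obs1 le X"
  then obtain a b c d where h: "X = {a, b, c, d}" "distinct [a, b, c, d]"
      "lt le a b" "lt le c d" "inc le a c" "inc le a d" "inc le b c" "inc le b d"
    unfolding is_obs1_def by blast
  have x: "x = a \<or> x = b \<or> x = c \<or> x = d" using XR h(1) by blast
  have mem: "\<And>e. e \<in> X \<Longrightarrow> e \<noteq> x \<Longrightarrow> e \<in> R" using XR by blast
  have ne: "a \<noteq> b" "a \<noteq> c" "a \<noteq> d" "b \<noteq> c" "b \<noteq> d" "c \<noteq> d" using h(2) by auto
  have X: "a \<in> X" "b \<in> X" "c \<in> X" "d \<in> X" using h(1) by auto
  show False using x
  proof (elim disjE)
    assume xa: "x = a"
    have "lt le a b \<longleftrightarrow> lt le a c" using regD[OF reg mem[OF X(2)] mem[OF X(3)] h(7)] xa ne by auto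
    then show False using h(3,5) unfolding lt_def inc_def by auto
  next
    assume xb: "x = b"
    have "lt le a b \<longleftrightarrow> lt le c b" using regD[OF reg mem[OF X(1)] mem[OF X(3)] h(5)] xb ne by auto
    then show False using h(3,7) unfolding lt_def inc_def by auto
  next
    assume xc: "x = c"
    have "lt le c a \<longleftrightarrow> lt le c d" using regD[OF reg mem[OF X(1)] mem[OF X(4)] h(6)] xc ne by auto
    then show False using h(4,5) unfolding lt_def inc_def by auto
  next
    assume xd: "x = d"
    have "lt le a d \<longleftrightarrow> lt le c d" using regD[OF reg mem[OF X(1)] mem[OF X(3)] h(5)] xd ne by auto
    then show False using h(4,6) unfolding lt_def inc_def by auto
  qed
next
  assume "is_obs2 le X"
  then obtain a b c d where h: "X = {a, b, c, d}" "distinct [a, b, c, d]"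
      "lt le a b" "lt le c d" "lt le c b" "inc le a c" "inc le a d" "inc le d b"
    unfolding is_obs2_def by blast
  have x: "x = a \<or> x = b \<or> x = c \<or> x = d" using XR h(1) by blast
  have mem: "\<And>e. e \<in> X \<Longrightarrow> e \<noteq> x \<Longrightarrow> e \<in> R" using XR by blast
  have ne: "a \<noteq> b" "a \<noteq> c" "a \<noteq> d" "b \<noteq> c" "b \<noteq> d" "c \<noteq> d" using h(2) by auto
  have X: "a \<in> X" "b \<in> X" "c \<in> X" "d \<in> X" using h(1) by auto
  show False using x
  proof (elim disjE)
    assume xa: "x = a"
    have "lt le a d \<longleftrightarrow> lt le a b" using regD[OF reg mem[OF X(4)] mem[OF X(2)] h(8)] xa ne by auto
    then show False using h(3,7) unfolding lt_def inc_def by auto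
  next
    assume xb: "x = b"
    have "lt le a b \<longleftrightarrow> lt le d b" using regD[OF reg mem[OF X(1)] mem[OF X(4)] h(7)] xb ne by auto
    then show False using h(3,8) unfolding lt_def inc_def by auto
  next
    assume xc: "x = c"
    have "lt le c a \<longleftrightarrow> lt le c d" using regD[OF reg mem[OF X(1)] mem[OF X(4)] h(7)] xc ne by auto
    then show False using h(4,6) unfolding lt_def inc_def by auto
  next
    assume xd: "x = d"
    have "lt le a d \<longleftrightarrow> lt le c d" using regD[OF reg mem[OF X(1)] mem[OF X(3)] h(6)] xd ne by auto
    then show False using h(4,7) unfolding lt_def inc_def by auto
  qed
qed

lemma backward:
  assumes tr: "trunk D le R" and it: "itov (D - R) le"
    and reg: "\<forall>x\<in>D - R. regular_to le R x"
    and no: "\<not> (\<exists>X\<subseteq>D. (is_obs1 le X \<or> is_obs2 le X) \<and>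
               X \<inter> R \<noteq> {} \<and> X - R \<noteq> {} \<and> card (X - R) \<ge> 2)"
  shows "itov D le"
  unfolding itov_def
proof
  assume "\<exists>X\<subseteq>D. is_obs1 le X \<or> is_obs2 le X"
  then obtain X where XD: "X \<subseteq> D" and ob: "is_obs1 le X \<or> is_obs2 le X" by blast
  have finX: "finite X" using obs_fin[OF ob] .
  show False
  proof (cases "X \<inter> R = {}")
    case True
    then have "X \<subseteq> D - R" using XD by blast
    then show False using it ob unfolding itov_def by blast
  next
    case False
    show False
    proof (cases "X - R = {}")
      case True
      then have "X \<subseteq> R" by blast
      then show False using obs_in_trunk[OF tr _ ob] by blast
    next
      case nonempty: False
      show False
      proof (cases "card (X - R) \<ge> 2")
        case True
        then show False using no XD ob False nonempty by blast
      next
        case small: False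
        have "card (X - R) \<noteq> 0" using nonempty finX by simp
        then have "card (X - R) = 1" using small by linarith
        then obtain x where x: "X - R = {x}" using card_1_singletonE by blast
        then have "x \<in> D - R" using XD by blast
        then have "regular_to le R x" using reg by blast
        then show False using one_out[OF ob x] by blast
      qed
    qed
  qed
qed

theorem theorem5:
  fixes D :: "'a set" and le :: "'a \<Rightarrow> 'a \<Rightarrow> bool"
  assumes "finite D" and "po_on D le"
  shows "itov D le \<longleftrightarrow>
    (\<exists>R. rel_max_full_trunk D le R \<and>
         itov (D - R) le \<and>
         (\<forall>x\<in>D - R. regular_to le R x) \<and>
         \<not> (\<exists>X\<subseteq>D. (is_obs1 le X \<or> is_obs2 le X) \<and>
               X \<inter> R \<noteq> {} \<and> X - R \<noteq> {} \<and> card (X - R) \<ge> 2))"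
proof
  assume it: "itov D le"
  note fin = assms(1) and po = assms(2)
  define M where "M = mcu D le"
  have trM: "trunk D le M" unfolding M_def by (rule mcu_trunk[OF fin po it])
  obtain C0 where C0: "max_chain D le C0" using exists_max_chain[OF fin] by blast
  have "C0 \<subseteq> M" using C0 unfolding M_def mcu_def by blast
  then have ftM: "full_trunk D le M" using trM C0 unfolding full_trunk_def by blast
  have sub: "\<And>T. full_trunk D le T \<Longrightarrow> T \<subseteq> M"
  proof
    fix T x assume ft: "full_trunk D le T" and x: "x \<in> T"
    obtain C where "max_chain D le C" "C \<subseteq> T" using ft unfolding full_trunk_def by blast
    then show "x \<in> M" unfolding M_def
      using FT[OF fin po _ _ _ x] ft unfolding full_trunk_def by blast
  qed
  have mftM: "maximal_full_trunk D le M"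
    unfolding maximal_full_trunk_def using ftM sub by blast
  have "rel_max_full_trunk D le M"
    unfolding rel_max_full_trunk_def
  proof (intro conjI allI impI)
    show "maximal_full_trunk D le M" by (rule mftM)
  next
    fix T assume "maximal_full_trunk D le T"
    then have "full_trunk D le T" "\<forall>T'. full_trunk D le T' \<and> T \<subseteq> T' \<longrightarrow> T' = T"
      unfolding maximal_full_trunk_def by blast+
    then show "T = M" using sub ftM by blast
  qed
  moreover have "itov (D - M) le" using itov_mono[OF it] by blast
  moreover have "\<forall>x\<in>D - M. regular_to le M x"
    unfolding M_def using regular_mcu[OF fin po it] by blast
  moreover have "\<not> (\<exists>X\<subseteq>D. (is_obs1 le X \<or> is_obs2 le X) \<and>
               X \<inter> M \<noteq> {} \<and> X - M \<noteq> {} \<and> card (X - M) \<ge> 2)"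
    using it unfolding itov_def by blast
  ultimately show "\<exists>R. rel_max_full_trunk D le R \<and>
         itov (D - R) le \<and>
         (\<forall>x\<in>D - R. regular_to le R x) \<and>
         \<not> (\<exists>X\<subseteq>D. (is_obs1 le X \<or> is_obs2 le X) \<and>
               X \<inter> R \<noteq> {} \<and> X - R \<noteq> {} \<and> card (X - R) \<ge> 2)" by blast
next
  assume "\<exists>R. rel_max_full_trunk D le R \<and>
         itov (D - R) le \<and>
         (\<forall>x\<in>D - R. regular_to le R x) \<and>
         \<not> (\<exists>X\<subseteq>D. (is_obs1 le X \<or> is_obs2 le X) \<and>
               X \<inter> R \<noteq> {} \<and> X - R \<noteq> {} \<and> card (X - R) \<ge> 2)"
  then obtain R where R: "rel_max_full_trunk D le R" "itov (D - R) le"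
      "\<forall>x\<in>D - R. regular_to le R x"
      "\<not> (\<exists>X\<subseteq>D. (is_obs1 le X \<or> is_obs2 le X) \<and>
               X \<inter> R \<noteq> {} \<and> X - R \<noteq> {} \<and> card (X - R) \<ge> 2)" by blast
  have "trunk D le R" using R(1)
    unfolding rel_max_full_trunk_def maximal_full_trunk_def full_trunk_def by blast
  then show "itov D le" using backward[OF _ R(2,3,4)] by blast
qed


end
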